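(* Let $f:\mathbb{Z}_2^n\to\mathbb{Z}_2$ be a boolean function with EPC distance $d$. Then for all $\mu\in\mathbb{Z}_2^n$, $k\preceq\mu$ and $u\in V_{\bar\mu}$, with $P_{u,k,\mu}=\sum_{x\in k+V_{\bar\mu}}(-1)^{f(x)+u\cdot x}$, $$|P_{u,k,\mu}|^2\le 2^{n-w(\mu)}\left\{\sum_{i=d-w(\mu)}^{n-w(\mu)}\binom{n-w(\mu)}{i}+1\right\},$$ where $\binom{m}{i}=0$ for $i<0$.
   Context: For $x\in\mathbb{Z}_2^n$, $w(x)$ is the Hamming weight; $x\preceq y$ means $x_j\le y_j$ for all $j$; $\bar a$ is the complement of $a$; $V_a=\{x: x\preceq a\}$ and, for $k\preceq\mu$, $k+V_{\bar\mu}=\{k+x: x\preceq\bar\mu\}$; exponents of $(-1)$ are computed mod 2. EPC distance: for $k\preceq\mu$, $v(a,k,\mu)=\sum_{x\in k+V_{\bar\mu}}(-1)^{f(x)+f(x+a)}$. For $l\ge1,q\ge0$, $f$ satisfies EPC($l$) of order $q$ if $v(a,k,\mu)=0$ whenever $k\preceq\mu$, $1\le w(a)\le l$, $0\le w(\mu)\le q$. The EPC distance of $f$ is the largest integer $d\ge1$ such that $f$ satisfies EPC($l$) of order $q$ for all $l\ge1,q\ge0$ with $l+q<d$. *)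

theory Defs
  imports Main
begin

text \<open>Vectors of Z_2^n are modelled as functions nat => bool vanishing outside {0..<n}.\<close>

definition vecs :: "nat \<Rightarrow> (nat \<Rightarrow> bool) set" where
  "vecs n = {x. \<forall>i\<ge>n. \<not> x i}"

definition wt :: "nat \<Rightarrow> (nat \<Rightarrow> bool) \<Rightarrow> nat" where
  "wt n x = card {i. i < n \<and> x i}"

definition prec :: "nat \<Rightarrow> (nat \<Rightarrow> bool) \<Rightarrow> (nat \<Rightarrow> bool) \<Rightarrow> bool" where
  "prec n x y \<longleftrightarrow> (\<forall>i<n. x i \<longrightarrow> y i)"

definition vcompl :: "nat \<Rightarrow> (nat \<Rightarrow> bool) \<Rightarrow> (nat \<Rightarrow> bool)" where
  "vcompl n a = (\<lambda>i. i < n \<and> \<not> a i)"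

definition vadd :: "(nat \<Rightarrow> bool) \<Rightarrow> (nat \<Rightarrow> bool) \<Rightarrow> (nat \<Rightarrow> bool)" where
  "vadd x y = (\<lambda>i. x i \<noteq> y i)"

text \<open>Inner product u . x, as a natural number (only its parity matters).\<close>
definition dotp :: "nat \<Rightarrow> (nat \<Rightarrow> bool) \<Rightarrow> (nat \<Rightarrow> bool) \<Rightarrow> nat" where
  "dotp n u x = card {i. i < n \<and> u i \<and> x i}"

definition bit :: "bool \<Rightarrow> nat" where
  "bit b = (if b then 1 else 0)"

definition Vset :: "nat \<Rightarrow> (nat \<Rightarrow> bool) \<Rightarrow> (nat \<Rightarrow> bool) set" where
  "Vset n a = {x \<in> vecs n. prec n x a}"

definition coset :: "nat \<Rightarrow> (nat \<Rightarrow> bool) \<Rightarrow> (nat \<Rightarrow> bool) \<Rightarrow> (nat \<Rightarrow> bool) set" where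
  "coset n k mu = (\<lambda>x. vadd k x) ` Vset n (vcompl n mu)"

definition epc_v :: "nat \<Rightarrow> ((nat \<Rightarrow> bool) \<Rightarrow> bool) \<Rightarrow> (nat \<Rightarrow> bool) \<Rightarrow> (nat \<Rightarrow> bool) \<Rightarrow> (nat \<Rightarrow> bool) \<Rightarrow> int" where
  "epc_v n f a k mu = (\<Sum>x\<in>coset n k mu. (-1::int) ^ (bit (f x) + bit (f (vadd x a))))"

definition EPC :: "nat \<Rightarrow> ((nat \<Rightarrow> bool) \<Rightarrow> bool) \<Rightarrow> nat \<Rightarrow> nat \<Rightarrow> bool" where
  "EPC n f l q \<longleftrightarrow> (\<forall>a\<in>vecs n. \<forall>k\<in>vecs n. \<forall>mu\<in>vecs n.
      prec n k mu \<and> 1 \<le> wt n a \<and> wt n a \<le> l \<and> wt n mu \<le> q \<longrightarrow> epc_v n f a k mu = 0)"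

definition EPC_upto :: "nat \<Rightarrow> ((nat \<Rightarrow> bool) \<Rightarrow> bool) \<Rightarrow> nat \<Rightarrow> bool" where
  "EPC_upto n f d \<longleftrightarrow> (\<forall>l q. 1 \<le> l \<and> l + q < d \<longrightarrow> EPC n f l q)"

definition has_EPC_distance :: "nat \<Rightarrow> ((nat \<Rightarrow> bool) \<Rightarrow> bool) \<Rightarrow> nat \<Rightarrow> bool" where
  "has_EPC_distance n f d \<longleftrightarrow> 1 \<le> d \<and> EPC_upto n f d \<and> (\<forall>d'. 1 \<le> d' \<and> EPC_upto n f d' \<longrightarrow> d' \<le> d)"

definition Pval :: "nat \<Rightarrow> ((nat \<Rightarrow> bool) \<Rightarrow> bool) \<Rightarrow> (nat \<Rightarrow> bool) \<Rightarrow> (nat \<Rightarrow> bool) \<Rightarrow> (nat \<Rightarrow> bool) \<Rightarrow> int" where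
  "Pval n f u k mu = (\<Sum>x\<in>coset n k mu. (-1::int) ^ (bit (f x) + dotp n u x))"

end

theory Submission
  imports Defs
begin

lemma vadd_vadd: "vadd x (vadd x y) = y" by (auto simp: vadd_def)

lemma vadd_inj: "vadd x a = vadd x b \<Longrightarrow> a = b"
  by (metis vadd_vadd)

lemma memA: "a \<in> Vset n (vcompl n mu) \<longleftrightarrow> (\<forall>i. a i \<longrightarrow> i < n \<and> \<not> mu i)"
  unfolding Vset_def vecs_def prec_def vcompl_def
  by (auto; meson not_le)

lemma memC: "y \<in> coset n k mu \<longleftrightarrow> vadd k y \<in> Vset n (vcompl n mu)"
proof
  assume "y \<in> coset n k mu"
  then show "vadd k y \<in> Vset n (vcompl n mu)" by (auto simp: coset_def vadd_vadd)
next
  assume "vadd k y \<in> Vset n (vcompl n mu)"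
  then have "vadd k (vadd k y) \<in> coset n k mu" unfolding coset_def by blast
  then show "y \<in> coset n k mu" by (simp add: vadd_vadd)
qed

lemma A_vadd: "a \<in> Vset n (vcompl n mu) \<Longrightarrow> b \<in> Vset n (vcompl n mu) \<Longrightarrow> vadd a b \<in> Vset n (vcompl n mu)"
  unfolding memA vadd_def by auto

lemma C_vadd: "x \<in> coset n k mu \<Longrightarrow> a \<in> Vset n (vcompl n mu) \<Longrightarrow> vadd x a \<in> coset n k mu"
proof -
  assume x: "x \<in> coset n k mu" and a: "a \<in> Vset n (vcompl n mu)"
  have "vadd k (vadd x a) = vadd (vadd k x) a" by (auto simp: vadd_def)
  then show ?thesis using x a A_vadd memC by metis
qed

lemma C_diff: "x \<in> coset n k mu \<Longrightarrow> y \<in> coset n k mu \<Longrightarrow> vadd x y \<in> Vset n (vcompl n mu)"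
proof -
  assume x: "x \<in> coset n k mu" and y: "y \<in> coset n k mu"
  have "vadd x y = vadd (vadd k x) (vadd k y)" by (auto simp: vadd_def)
  then show ?thesis using x y A_vadd memC by metis
qed

lemma sign_parity: "even (p + q + r) \<Longrightarrow> (-1::int)^(p+q) = (-1)^r"
proof -
  assume "even (p + q + r)"
  then have "even (p+q) \<longleftrightarrow> even r" by simp
  then show ?thesis by (simp add: minus_one_power_iff)
qed

lemma parity_dotp: "even (dotp n u x + dotp n u (vadd x a) + dotp n u a)"
proof -
  define X where "X = {i. i < n \<and> u i \<and> x i}"
  define Y where "Y = {i. i < n \<and> u i \<and> a i}"
  define Z where "Z = {i. i < n \<and> u i \<and> vadd x a i}"
  have fX: "finite X" "finite Y" unfolding X_def Y_def by auto
  have cX: "card X = card (X - Y) + card (X \<inter> Y)"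
    using card_Un_disjoint[of "X-Y" "X\<inter>Y"] fX by (simp add: Un_Diff_Int Diff_Int_distrib2 inf_assoc)
  have cY: "card Y = card (Y - X) + card (X \<inter> Y)"
  proof -
    have "Y - X \<union> X \<inter> Y = Y" by auto
    moreover have "(Y - X) \<inter> (X \<inter> Y) = {}" by auto
    ultimately show ?thesis using card_Un_disjoint[of "Y-X" "X\<inter>Y"] fX by simp
  qed
  have "Z = (X - Y) \<union> (Y - X)" unfolding X_def Y_def Z_def vadd_def by auto
  then have cZ: "card Z = card (X - Y) + card (Y - X)"
    using card_Un_disjoint[of "X-Y" "Y-X"] fX by auto
  have "card X + card Z + card Y = 2 * (card (X - Y) + card (Y - X) + card (X \<inter> Y))"
    using cX cY cZ by simp
  then show ?thesis unfolding dotp_def X_def[symmetric] Y_def[symmetric] Z_def[symmetric]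
    by (metis dvd_triv_left)
qed

theorem mainTheorem4:
  fixes n d :: nat and f :: "(nat \<Rightarrow> bool) \<Rightarrow> bool"
  assumes "has_EPC_distance n f d"
  shows "\<forall>mu\<in>vecs n. \<forall>k\<in>vecs n. \<forall>u\<in>Vset n (vcompl n mu). prec n k mu \<longrightarrow>
    \<bar>Pval n f u k mu\<bar> ^ 2 \<le>
      2 ^ (n - wt n mu) *
      ((\<Sum>i\<in>{int d - int (wt n mu) .. int (n - wt n mu)}.
          if i < 0 then 0 else int ((n - wt n mu) choose nat i)) + 1)"
proof (intro ballI impI)
  fix mu k u assume mu: "mu \<in> vecs n" and k: "k \<in> vecs n"
    and u: "u \<in> Vset n (vcompl n mu)" and pk: "prec n k mu"
  have epc: "EPC_upto n f d" using assms by (simp add: has_EPC_distance_def)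
  define A where "A = Vset n (vcompl n mu)"
  define C where "C = coset n k mu"
  define S where "S = {i. i < n \<and> \<not> mu i}"
  define m where "m = wt n mu"
  define N where "N = n - m"
  define s where "s = (\<lambda>x. (-1::int)^(bit (f x) + dotp n u x))"
  define e where "e = (\<lambda>a. epc_v n f a k mu)"
  define g where "g = (\<lambda>T::nat set. \<lambda>i. i \<in> T)"
  have finS: "finite S" unfolding S_def by auto
  have "{i. i < n} = S \<union> {i. i < n \<and> mu i}" "S \<inter> {i. i < n \<and> mu i} = {}"
    unfolding S_def by auto
  then have "n = card S + m" unfolding m_def wt_def
    by (metis card_Collect_less_nat card_Un_disjoint finS finite_Collect_conjI finite_Collect_less_nat)
  then have cardS: "card S = N" unfolding N_def by simp
  have Aeq: "A = g ` Pow S"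
  proof
    show "A \<subseteq> g ` Pow S"
    proof
      fix a assume "a \<in> A"
      then have "{i. a i} \<subseteq> S" "a = g {i. a i}" unfolding A_def memA S_def g_def by auto
      then show "a \<in> g ` Pow S" by blast
    qed
    show "g ` Pow S \<subseteq> A" unfolding A_def S_def g_def by (auto simp: memA)
  qed
  have ginj: "inj g" unfolding g_def inj_def by (metis Collect_mem_eq)
  have gwt: "wt n (g T) = card T" if "T \<subseteq> S" for T
  proof -
    have "{i. i < n \<and> g T i} = T" using that unfolding g_def S_def by auto
    then show ?thesis by (simp add: wt_def)
  qed
  have finA: "finite A" using Aeq finS by simp
  have cardA: "card A = 2 ^ N" using Aeq ginj finS cardS
    by (simp add: card_image inj_on_subset card_Pow)
  have Ceq: "C = vadd k ` A" unfolding C_def A_def coset_def by simp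
  have "card (vadd k ` A) = card A" by (rule card_image) (meson inj_onI vadd_inj)
  then have cardC: "card C = 2 ^ N" using Ceq cardA by simp
  have finC: "finite C" using Ceq finA by simp
  have Pv: "Pval n f u k mu = (\<Sum>x\<in>C. s x)" unfolding Pval_def C_def s_def by simp
  have pt: "s x * s (vadd x a) = (-1)^(dotp n u a) * (-1)^(bit (f x) + bit (f (vadd x a)))" for x a
  proof -
    have "s x * s (vadd x a) = (-1)^(bit (f x) + bit (f (vadd x a))) *
        (-1::int)^(dotp n u x + dotp n u (vadd x a))"
      unfolding s_def by (simp add: power_add mult_ac)
    also have "(-1::int)^(dotp n u x + dotp n u (vadd x a)) = (-1)^(dotp n u a)"
      by (rule sign_parity[OF parity_dotp])
    finally show ?thesis by simp
  qed
  have sq: "(\<Sum>x\<in>C. s x)^2 = (\<Sum>a\<in>A. (-1)^(dotp n u a) * e a)"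
  proof -
    have "(\<Sum>x\<in>C. s x)^2 = (\<Sum>x\<in>C. \<Sum>y\<in>C. s x * s y)"
      by (simp add: power2_eq_square sum_product)
    also have "\<dots> = (\<Sum>x\<in>C. \<Sum>a\<in>A. s x * s (vadd x a))"
    proof (rule sum.cong[OF refl])
      fix x assume x: "x \<in> C"
      have "bij_betw (vadd x) A C"
        unfolding bij_betw_def
      proof
        show "inj_on (vadd x) A" by (meson inj_onI vadd_inj)
        show "vadd x ` A = C"
        proof
          show "vadd x ` A \<subseteq> C" using x C_vadd unfolding A_def C_def by blast
          show "C \<subseteq> vadd x ` A"
          proof
            fix y assume "y \<in> C"
            then have "vadd x y \<in> A" using x C_diff unfolding A_def C_def by blast
            then show "y \<in> vadd x ` A" by (metis image_eqI vadd_vadd)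
          qed
        qed
      qed
      then show "(\<Sum>y\<in>C. s x * s y) = (\<Sum>a\<in>A. s x * s (vadd x a))"
        by (rule sum.reindex_bij_betw[symmetric])
    qed
    also have "\<dots> = (\<Sum>a\<in>A. \<Sum>x\<in>C. s x * s (vadd x a))" by (rule sum.swap)
    also have "\<dots> = (\<Sum>a\<in>A. (-1)^(dotp n u a) * e a)"
      unfolding e_def epc_v_def C_def[symmetric] pt by (simp add: sum_distrib_left)
    finally show ?thesis .
  qed
  have ebound: "\<bar>e a\<bar> \<le> 2 ^ N" for a
  proof -
    have "\<bar>e a\<bar> \<le> (\<Sum>x\<in>C. \<bar>(-1::int) ^ (bit (f x) + bit (f (vadd x a)))\<bar>)"
      unfolding e_def epc_v_def C_def[symmetric] by (rule sum_abs)
    also have "\<dots> = int (card C)" by simp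
    finally show ?thesis using cardC by simp
  qed
  define G where "G = {a \<in> A. wt n a = 0 \<or> d \<le> wt n a + m}"
  have ezero: "e a = 0" if "a \<in> A - G" for a
  proof -
    have a: "a \<in> A" "1 \<le> wt n a" "wt n a + m < d" using that unfolding G_def by auto
    have "EPC n f (wt n a) m" using epc a unfolding EPC_upto_def by auto
    moreover have "a \<in> vecs n" using a(1) unfolding A_def Vset_def by simp
    ultimately show ?thesis using k mu pk a(2) unfolding EPC_def e_def m_def by auto
  qed
  have GA: "G \<subseteq> A" unfolding G_def by auto
  have "(\<Sum>x\<in>C. s x)^2 \<le> (\<Sum>a\<in>A. \<bar>(-1::int)^(dotp n u a) * e a\<bar>)"
    unfolding sq by (rule order_trans[OF abs_ge_self sum_abs])
  also have "\<dots> = (\<Sum>a\<in>A. \<bar>e a\<bar>)" by (simp add: abs_mult)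
  also have "\<dots> = (\<Sum>a\<in>A - G. \<bar>e a\<bar>) + (\<Sum>a\<in>G. \<bar>e a\<bar>)"
    using sum.subset_diff[OF GA finA] by simp
  also have "\<dots> = (\<Sum>a\<in>G. \<bar>e a\<bar>)" using ezero by simp
  also have "\<dots> \<le> (\<Sum>a\<in>G. 2 ^ N)" by (rule sum_mono) (rule ebound)
  also have "\<dots> = 2 ^ N * int (card G)" by simp
  finally have main: "(\<Sum>x\<in>C. s x)^2 \<le> 2 ^ N * int (card G)" .
  define L where "L = d - m"
  have GU: "G \<subseteq> {a \<in> A. wt n a = 0} \<union> {a \<in> A. L \<le> wt n a}" unfolding G_def L_def by auto
  have fU: "finite ({a \<in> A. wt n a = 0} \<union> {a \<in> A. L \<le> wt n a})" using finA by simp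
  have "card G \<le> card ({a \<in> A. wt n a = 0} \<union> {a \<in> A. L \<le> wt n a})"
    by (rule card_mono[OF fU GU])
  also have "\<dots> \<le> card {a \<in> A. wt n a = 0} + card {a \<in> A. L \<le> wt n a}"
    by (rule card_Un_le)
  finally have c1: "card G \<le> card {a \<in> A. wt n a = 0} + card {a \<in> A. L \<le> wt n a}" .
  have "{a \<in> A. wt n a = 0} \<subseteq> {\<lambda>_. False}"
  proof
    fix a assume "a \<in> {a \<in> A. wt n a = 0}"
    then have "a \<in> A" "card {i. i < n \<and> a i} = 0" unfolding wt_def by auto
    then have "{i. i < n \<and> a i} = {}" "\<forall>i. a i \<longrightarrow> i < n" unfolding A_def memA by auto
    then show "a \<in> {\<lambda>_. False}" by auto
  qed
  then have "card {a \<in> A. wt n a = 0} \<le> card {\<lambda>_::nat. False}" by (rule card_mono[rotated]) simp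
  then have c2: "card {a \<in> A. wt n a = 0} \<le> 1" by simp
  define X where "X = {T. T \<subseteq> S \<and> L \<le> card T}"
  have "{a \<in> A. L \<le> wt n a} \<subseteq> g ` X"
  proof
    fix a assume "a \<in> {a \<in> A. L \<le> wt n a}"
    then obtain T where "T \<subseteq> S" "a = g T" "L \<le> wt n a" using Aeq by auto
    then show "a \<in> g ` X" unfolding X_def using gwt by auto
  qed
  moreover have finX: "finite X" unfolding X_def using finS by simp
  ultimately have "card {a \<in> A. L \<le> wt n a} \<le> card (g ` X)"
    by (meson card_mono finite_imageI)
  then have c3: "card {a \<in> A. L \<le> wt n a} \<le> card X"
    using card_image_le[OF finX, of g] by linarith
  have "X \<subseteq> (\<Union>j\<in>{L..N}. {T. T \<subseteq> S \<and> card T = j})"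
  proof
    fix T assume "T \<in> X"
    then have "T \<subseteq> S" "L \<le> card T" unfolding X_def by auto
    moreover then have "card T \<le> N" using cardS finS card_mono by metis
    ultimately show "T \<in> (\<Union>j\<in>{L..N}. {T. T \<subseteq> S \<and> card T = j})" by auto
  qed
  then have "card X \<le> card (\<Union>j\<in>{L..N}. {T. T \<subseteq> S \<and> card T = j})"
    by (rule card_mono[rotated]) (simp add: finS)
  also have "\<dots> \<le> (\<Sum>j\<in>{L..N}. card {T. T \<subseteq> S \<and> card T = j})"
    by (rule card_UN_le) simp
  also have "\<dots> = (\<Sum>j\<in>{L..N}. N choose j)"
    using n_subsets[OF finS] cardS by simp
  finally have c4: "card X \<le> (\<Sum>j\<in>{L..N}. N choose j)" .
  have cG: "card G \<le> (\<Sum>j\<in>{L..N}. N choose j) + 1" using c1 c2 c3 c4 by linarith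
  define h where "h = (\<lambda>i::int. if i < 0 then 0 else int (N choose nat i))"
  have "int (\<Sum>j\<in>{L..N}. N choose j) = (\<Sum>j\<in>{L..N}. h (int j))"
    unfolding h_def by simp
  also have "\<dots> = (\<Sum>i\<in>int ` {L..N}. h i)"
    by (simp add: sum.reindex)
  also have "\<dots> \<le> (\<Sum>i\<in>{int d - int m .. int N}. h i)"
  proof (rule sum_mono2)
    show "finite {int d - int m .. int N}" by simp
    show "int ` {L..N} \<subseteq> {int d - int m .. int N}" unfolding L_def by auto
    show "\<And>b. b \<in> {int d - int m..int N} - int ` {L..N} \<Longrightarrow> 0 \<le> h b" unfolding h_def by simp
  qed
  finally have fin: "int (card G) \<le> (\<Sum>i\<in>{int d - int m .. int N}. h i) + 1"
    using cG by linarith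
  have "\<bar>Pval n f u k mu\<bar> ^ 2 = (\<Sum>x\<in>C. s x)^2" by (simp add: Pv)
  also have "\<dots> \<le> 2 ^ N * ((\<Sum>i\<in>{int d - int m .. int N}. h i) + 1)"
  proof -
    have "(2::int) ^ N * int (card G) \<le> 2 ^ N * ((\<Sum>i\<in>{int d - int m .. int N}. h i) + 1)"
      using fin by (rule mult_left_mono) simp
    then show ?thesis using main by linarith
  qed
  finally show "\<bar>Pval n f u k mu\<bar> ^ 2 \<le>
      2 ^ (n - wt n mu) *
      ((\<Sum>i\<in>{int d - int (wt n mu) .. int (n - wt n mu)}.
          if i < 0 then 0 else int ((n - wt n mu) choose nat i)) + 1)"
    unfolding h_def N_def m_def .
qed

end
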